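(* Let $U$ be a disjunctive uninorm with neutral element $e\in\,]0,1[$, let $x\in[0,1]$ with $x<e$ be such that $U(x,\cdot)$ is continuous with range $[0,1]$, and let $f(s)=U(x,s)$ for $s\in[0,1]$. Let $a_x=\lim_{n\to+\infty}x_U^{(n)}$ and $d_x=\lim_{n\to+\infty}x_U^{(-n)}$. Then: (i) $f(s)\neq s$ for all $s\in\,]a_x,d_x[$; (ii) if $f(s)=s$ for some $s\in[0,1]$, then $U(s,t)\notin\,]a_x,d_x[$ for all $t\in[0,1]$; (iii) $f(a_x)=a_x$ and $f(d_x)=d_x$; (iv) $U(a_x,d_x)\in\{a_x,d_x\}$.
   Context: A uninorm is a map $U:[0,1]^2\to[0,1]$ that is commutative, associative, non-decreasing in each variable, and has a neutral element $e\in[0,1]$; it is disjunctive if $U(1,0)=1$. Under the hypotheses there is a unique $y\in[0,1]$ with $U(x,y)=e$ (and $y>e$). Define $x_U^{(0)}=e$, $x_U^{(n)}=U(x,x_U^{(n-1)})$ for $n\in\mathbb{N}$, and $x_U^{(-n)}=y_U^{(n)}$ where $y_U^{(0)}=e$, $y_U^{(n)}=U(y,y_U^{(n-1)})$; the sequence $(x_U^{(n)})_{n\ge0}$ is non-increasing and $(x_U^{(-n)})_{n\ge0}$ is non-decreasing, so the limits exist. *)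

theory Defs
  imports "HOL-Analysis.Analysis"
begin

text \<open>A uninorm on [0,1] with neutral element e (values outside [0,1]^2 are irrelevant).\<close>
definition uninorm :: "(real \<Rightarrow> real \<Rightarrow> real) \<Rightarrow> real \<Rightarrow> bool" where
  "uninorm U e \<longleftrightarrow>
     e \<in> {0..1} \<and>
     (\<forall>x\<in>{0..1}. \<forall>y\<in>{0..1}. U x y \<in> {0..1}) \<and>
     (\<forall>x\<in>{0..1}. \<forall>y\<in>{0..1}. U x y = U y x) \<and>
     (\<forall>x\<in>{0..1}. \<forall>y\<in>{0..1}. \<forall>z\<in>{0..1}. U (U x y) z = U x (U y z)) \<and>
     (\<forall>x\<in>{0..1}. \<forall>y\<in>{0..1}. \<forall>z\<in>{0..1}. x \<le> y \<longrightarrow> U x z \<le> U y z) \<and>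
     (\<forall>x\<in>{0..1}. U e x = x)"

definition disjunctive_uninorm :: "(real \<Rightarrow> real \<Rightarrow> real) \<Rightarrow> real \<Rightarrow> bool" where
  "disjunctive_uninorm U e \<longleftrightarrow> uninorm U e \<and> U 1 0 = 1"

fun upow :: "(real \<Rightarrow> real \<Rightarrow> real) \<Rightarrow> real \<Rightarrow> real \<Rightarrow> nat \<Rightarrow> real" where
  "upow U e x 0 = e"
| "upow U e x (Suc n) = U x (upow U e x n)"

definition uinv :: "(real \<Rightarrow> real \<Rightarrow> real) \<Rightarrow> real \<Rightarrow> real \<Rightarrow> real" where
  "uinv U e x = (THE y. y \<in> {0..1} \<and> U x y = e)"

definition upow_neg :: "(real \<Rightarrow> real \<Rightarrow> real) \<Rightarrow> real \<Rightarrow> real \<Rightarrow> nat \<Rightarrow> real" where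
  "upow_neg U e x n = upow U e (uinv U e x) n"

end

theory Submission
  imports Defs
begin

theorem mainTheorem10:
  fixes U :: "real \<Rightarrow> real \<Rightarrow> real" and e x :: real
  assumes "disjunctive_uninorm U e"
    and "0 < e" and "e < 1"
    and "x \<in> {0..1}" and "x < e"
    and "continuous_on {0..1} (U x)"
    and "U x ` {0..1} = {0..1}"
  defines "f \<equiv> (\<lambda>s. U x s)"
    and "a \<equiv> lim (upow U e x)"
    and "d \<equiv> lim (upow_neg U e x)"
  shows "(\<forall>s\<in>{a<..<d}. f s \<noteq> s)
    \<and> (\<forall>s\<in>{0..1}. f s = s \<longrightarrow> (\<forall>t\<in>{0..1}. U s t \<notin> {a<..<d}))
    \<and> (f a = a \<and> f d = d)
    \<and> U a d \<in> {a, d}"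
proof -
  have un: "uninorm U e" using assms(1) unfolding disjunctive_uninorm_def by simp
  have cl: "\<And>p q. p \<in> {0..1} \<Longrightarrow> q \<in> {0..1} \<Longrightarrow> U p q \<in> {0..1}"
    using un unfolding uninorm_def by blast
  have comm: "\<And>p q. p \<in> {0..1} \<Longrightarrow> q \<in> {0..1} \<Longrightarrow> U p q = U q p"
    using un unfolding uninorm_def by blast
  have assoc: "\<And>p q r. p \<in> {0..1} \<Longrightarrow> q \<in> {0..1} \<Longrightarrow> r \<in> {0..1} \<Longrightarrow> U (U p q) r = U p (U q r)"
    using un unfolding uninorm_def by blast
  have mono1: "\<And>p q r. p \<in> {0..1} \<Longrightarrow> q \<in> {0..1} \<Longrightarrow> r \<in> {0..1} \<Longrightarrow> p \<le> q \<Longrightarrow> U p r \<le> U q r"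
    using un unfolding uninorm_def by blast
  have neut: "\<And>p. p \<in> {0..1} \<Longrightarrow> U e p = p"
    using un unfolding uninorm_def by blast
  have e01: "e \<in> {0..1}" using assms(2,3) by auto
  have mono2: "\<And>p q r. p \<in> {0..1} \<Longrightarrow> q \<in> {0..1} \<Longrightarrow> r \<in> {0..1} \<Longrightarrow> q \<le> r \<Longrightarrow> U p q \<le> U p r"
  proof -
    fix p q r :: real assume h: "p \<in> {0..1}" "q \<in> {0..1}" "r \<in> {0..1}" "q \<le> r"
    have "U q p \<le> U r p" using mono1 h by blast
    then show "U p q \<le> U p r" using comm[OF h(1) h(2)] comm[OF h(1) h(3)] by simp
  qed
  have neut2: "\<And>p. p \<in> {0..1} \<Longrightarrow> U p e = p" using neut comm[OF _ e01] by simp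
  obtain y where y01: "y \<in> {0..1}" and xy: "U x y = e"
  proof -
    have "e \<in> U x ` {0..1}" using assms(7) e01 by simp
    then show ?thesis using that by blast
  qed
  have yx: "U y x = e" using comm[OF y01 assms(4)] xy by simp
  have uinv: "uinv U e x = y"
    unfolding uinv_def
  proof (rule the_equality)
    show "y \<in> {0..1} \<and> U x y = e" using y01 xy by simp
  next
    fix z assume "z \<in> {0..1} \<and> U x z = e"
    then have z: "z \<in> {0..1}" "U x z = e" by auto
    have "z = U e z" using neut z by simp
    also have "\<dots> = U (U y x) z" using yx by simp
    also have "\<dots> = U y (U x z)" using assoc y01 assms(4) z by blast
    also have "\<dots> = U y e" using z by simp
    also have "\<dots> = y" using neut2 y01 by simp
    finally show "z = y" .
  qed
  have gf: "\<And>s. s \<in> {0..1} \<Longrightarrow> U y (U x s) = s"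
    using assoc[OF y01 assms(4)] yx neut by simp
  have fg: "\<And>s. s \<in> {0..1} \<Longrightarrow> U x (U y s) = s"
    using assoc[OF assms(4) y01] xy neut by simp
  have fmono: "\<And>s t. s \<in> {0..1} \<Longrightarrow> t \<in> {0..1} \<Longrightarrow> s \<le> t \<Longrightarrow> U x s \<le> U x t"
    using mono2 assms(4) by blast
  have gmono: "\<And>s t. s \<in> {0..1} \<Longrightarrow> t \<in> {0..1} \<Longrightarrow> s \<le> t \<Longrightarrow> U y s \<le> U y t"
    using mono2 y01 by blast
  have fe: "U x e = x" using neut2 assms(4) by simp
  have ye: "e < y"
  proof (rule ccontr)
    assume "\<not> e < y"
    then have "U x y \<le> U x e" using fmono y01 e01 by simp
    then show False using xy fe assms(5) by simp
  qed
  have ge: "U y e = y" using neut2 y01 by simp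
  define P where "P = upow U e x"
  define Q where "Q = upow_neg U e x"
  have Qdef: "\<And>n. Q n = upow U e y n" unfolding Q_def upow_neg_def uinv by simp
  have P01: "\<And>n. P n \<in> {0..1}"
  proof -
    fix n show "P n \<in> {0..1}" unfolding P_def
      by (induction n) (use e01 cl assms(4) in auto)
  qed
  have Q01: "\<And>n. Q n \<in> {0..1}"
  proof -
    fix n show "Q n \<in> {0..1}" unfolding Qdef
      by (induction n) (use e01 cl y01 in auto)
  qed
  have PSuc: "\<And>n. P (Suc n) = U x (P n)" unfolding P_def by simp
  have QSuc: "\<And>n. Q (Suc n) = U y (Q n)" unfolding Qdef by simp
  have Pdec: "\<And>n. P (Suc n) \<le> P n"
  proof -
    fix n show "P (Suc n) \<le> P n"
    proof (induction n)
      case 0 then show ?case using PSuc fe assms(5) unfolding P_def by simp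
    next
      case (Suc n)
      then show ?case using fmono[OF P01 P01 Suc.IH] PSuc by simp
    qed
  qed
  have Qinc: "\<And>n. Q n \<le> Q (Suc n)"
  proof -
    fix n show "Q n \<le> Q (Suc n)"
    proof (induction n)
      case 0 then show ?case using QSuc ge ye unfolding Qdef by simp
    next
      case (Suc n)
      then show ?case using gmono[OF Q01 Q01 Suc.IH] QSuc by simp
    qed
  qed
  have decP: "decseq P" using Pdec by (simp add: decseq_SucI)
  have incQ: "incseq Q" using Qinc by (simp add: incseq_SucI)
  have convP: "convergent P"
  proof (rule Bseq_monoseq_convergent)
    show "Bseq P" using P01 by (intro BseqI'[of _ 1]) auto
    show "monoseq P" using decP unfolding monoseq_iff by simp
  qed
  have convQ: "convergent Q"
  proof (rule Bseq_monoseq_convergent)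
    show "Bseq Q" using Q01 by (intro BseqI'[of _ 1]) auto
    show "monoseq Q" using incQ unfolding monoseq_iff by simp
  qed
  have la: "lim P = a" by (simp add: a_def P_def)
  have ld: "lim Q = d" by (simp add: d_def Q_def)
  have Plim: "P \<longlonglongrightarrow> a" using convP la by (simp add: convergent_LIMSEQ_iff)
  have Qlim: "Q \<longlonglongrightarrow> d" using convQ ld by (simp add: convergent_LIMSEQ_iff)
  have a01: "a \<in> {0..1}"
    using closed_sequentially[OF closed_atLeastAtMost, of P 0 1 a] Plim P01 by blast
  have d01: "d \<in> {0..1}"
    using closed_sequentially[OF closed_atLeastAtMost, of Q 0 1 d] Qlim Q01 by blast
  have aleP: "\<And>n. a \<le> P n" using decP Plim decseq_ge by blast
  have Qled: "\<And>n. Q n \<le> d" using incQ Qlim incseq_le by blast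
  have ae: "a < e" using aleP[of 1] PSuc fe assms(5) unfolding P_def by simp
  have ed: "e < d" using Qled[of 1] QSuc ge ye unfolding Qdef by simp
  have fcomp: "\<And>(S::nat \<Rightarrow> real) l. S \<longlonglongrightarrow> l \<Longrightarrow> l \<in> {0..1} \<Longrightarrow> (\<forall>n. S n \<in> {0..1}) \<Longrightarrow> (\<lambda>n. U x (S n)) \<longlonglongrightarrow> U x l"
  proof -
    fix S :: "nat \<Rightarrow> real" and l :: real assume h: "S \<longlonglongrightarrow> l" "l \<in> {0..1}" "\<forall>n. S n \<in> {0..1}"
    have ev: "\<forall>\<^sub>F n in sequentially. S n \<in> {0..1}" using h(3) by simp
    show "(\<lambda>n. U x (S n)) \<longlonglongrightarrow> U x l"
      using continuous_on_tendsto_compose[OF assms(6) h(1) h(2) ev] by simp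
  qed
  have fa: "U x a = a"
  proof -
    have "(\<lambda>n. U x (P n)) \<longlonglongrightarrow> U x a" using fcomp Plim a01 P01 by blast
    moreover have "(\<lambda>n. P (Suc n)) \<longlonglongrightarrow> a" using Plim by (rule LIMSEQ_Suc)
    then have "(\<lambda>n. U x (P n)) \<longlonglongrightarrow> a" using PSuc by simp
    ultimately show ?thesis using LIMSEQ_unique by blast
  qed
  have fd: "U x d = d"
  proof -
    have "(\<lambda>n. Q (Suc n)) \<longlonglongrightarrow> d" using Qlim LIMSEQ_Suc by blast
    then have "(\<lambda>n. U x (Q (Suc n))) \<longlonglongrightarrow> U x d" using fcomp d01 Q01 by blast
    moreover have "\<And>n. U x (Q (Suc n)) = Q n" using QSuc fg Q01 by simp
    ultimately have "Q \<longlonglongrightarrow> U x d" by simp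
    then show ?thesis using Qlim LIMSEQ_unique by blast
  qed
  have part1: "\<forall>s\<in>{a<..<d}. f s \<noteq> s"
  proof
    fix s assume s: "s \<in> {a<..<d}"
    have s01: "s \<in> {0..1}" using s a01 d01 by auto
    show "f s \<noteq> s"
    proof
      assume fs: "f s = s"
      then have fs': "U x s = s" unfolding f_def .
      show False
      proof (cases "s \<le> e")
        case True
        have "\<And>n. s \<le> P n"
        proof -
          fix n show "s \<le> P n"
          proof (induction n)
            case 0 then show ?case using True unfolding P_def by simp
          next
            case (Suc n)
            then show ?case using fmono[OF s01 P01 Suc.IH] PSuc fs' by simp
          qed
        qed
        then have "s \<le> a" using Plim by (intro LIMSEQ_le_const) auto
        then show False using s by simp
      next
        case False
        have gs: "U y s = s" using gf[OF s01] fs' by simp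
        have "\<And>n. Q n \<le> s"
        proof -
          fix n show "Q n \<le> s"
          proof (induction n)
            case 0 then show ?case using False unfolding Qdef by simp
          next
            case (Suc n)
            then show ?case using gmono[OF Q01 s01 Suc.IH] QSuc gs by simp
          qed
        qed
        then have "d \<le> s" using Qlim by (intro LIMSEQ_le_const2) auto
        then show False using s by simp
      qed
    qed
  qed
  have part2: "\<forall>s\<in>{0..1}. f s = s \<longrightarrow> (\<forall>t\<in>{0..1}. U s t \<notin> {a<..<d})"
  proof (intro ballI impI)
    fix s t :: real assume s: "s \<in> {0..1}" and fs: "f s = s" and t: "t \<in> {0..1}"
    have "f (U s t) = U (U x s) t" unfolding f_def using assoc[OF assms(4) s t] by simp
    also have "\<dots> = U s t" using fs unfolding f_def by simp
    finally show "U s t \<notin> {a<..<d}" using part1 by blast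
  qed
  have part4: "U a d \<in> {a, d}"
  proof -
    have "U a e \<le> U a d" using mono2 a01 e01 d01 ed by simp
    then have l: "a \<le> U a d" using neut2 a01 by simp
    have "U a d \<le> U e d" using mono1 a01 e01 d01 ae by simp
    then have r: "U a d \<le> d" using neut d01 by simp
    have "U a d \<notin> {a<..<d}" using part2 a01 d01 fa unfolding f_def by blast
    then show ?thesis using l r by auto
  qed
  show ?thesis using part1 part2 part4 fa fd unfolding f_def by simp
qed

end
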